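(* For all integers $u\ge 4$, $$3\,C_{24}^{(3\cdot 2^u)}\equiv C_0+2^{u-2}C_1 \pmod{2^u},$$ where $C_0=\mathrm{Circ}(2,0,0,0,0,0,0,0,-1,0,0,0,0,0,0,0,-1,0,0,0,0,0,0,0)$ and $C_1=\mathrm{Circ}(2,0,2,0,1,0,2,0,1,0,0,0,2,0,0,0,1,0,2,0,1,0,2,0)$.
   Context: For integers $k,i\ge0$, $C_k^{(i)}$ is the $k\times k$ integer matrix $\big(\sum_{\alpha\in\mathbb{Z}}\binom{i}{\alpha k+r-s}\big)_{1\le r,s\le k}$, with $\binom{a}{b}=0$ if $b<0$ or $b>a$. For a $k$-tuple $(u_0,\dots,u_{k-1})$, $\mathrm{Circ}(u_0,\dots,u_{k-1})$ is the $k\times k$ matrix whose $(r,s)$ entry is $u_{(s-r \bmod k)}$. Congruence of matrices is entrywise. *)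

theory Defs
  imports Main
begin

definition ibinom :: "nat \<Rightarrow> int \<Rightarrow> int" where
  "ibinom a b = (if b < 0 \<or> b > int a then 0 else int (a choose nat b))"

text \<open>Entry (r,s) (1 <= r,s <= k) of C_k^(i): sum over alpha in Z of binom(i, alpha k + r - s).
  For k >= 1 only finitely many alpha give a nonzero term; all of them satisfy |alpha| <= i + k,
  so the sum over Z equals the sum over that finite range.\<close>
definition Cmat :: "nat \<Rightarrow> nat \<Rightarrow> nat \<Rightarrow> nat \<Rightarrow> int" where
  "Cmat k i r s = (\<Sum>\<alpha>\<in>{-(int i + int k)..int i + int k}. ibinom i (\<alpha> * int k + int r - int s))"

definition Circ :: "int list \<Rightarrow> nat \<Rightarrow> nat \<Rightarrow> int" where
  "Circ us r s = us ! nat ((int s - int r) mod int (length us))"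

definition C0list :: "int list" where
  "C0list = [2,0,0,0,0,0,0,0,-1,0,0,0,0,0,0,0,-1,0,0,0,0,0,0,0]"

definition C1list :: "int list" where
  "C1list = [2,0,2,0,1,0,2,0,1,0,0,0,2,0,0,0,1,0,2,0,1,0,2,0]"

end

theory Submission
  imports Defs
begin




definition cnt :: "nat \<Rightarrow> nat \<Rightarrow> int" where
  "cnt n x = (\<Sum>j\<le>n. if j mod 24 = x mod 24 then int (n choose j) else 0)"
definition cv :: "(nat \<Rightarrow> int) \<Rightarrow> (nat \<Rightarrow> int) \<Rightarrow> nat \<Rightarrow> int" where
  "cv f g x = (\<Sum>e<24. f e * g (x mod 24 + 24 - e))"
definition per :: "(nat \<Rightarrow> int) \<Rightarrow> bool" where "per f \<longleftrightarrow> (\<forall>x. f x = f (x mod 24))"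

lemma modeq: "((a::nat) mod 24 = b mod 24) \<longleftrightarrow> (24::int) dvd (int a - int b)"
proof -
  have "((a::nat) mod 24 = b mod 24) \<longleftrightarrow> int a mod 24 = int b mod 24"
    by (simp only: of_nat_eq_iff[symmetric, where 'a=int] zmod_int of_nat_numeral)
  also have "\<dots> \<longleftrightarrow> (24::int) dvd (int a - int b)" by (rule mod_eq_dvd_iff)
  finally show ?thesis .
qed
lemma aux0: "e < 24 \<Longrightarrow> ((y::nat) mod 24 + 24 - e) mod 24 = 0 \<longleftrightarrow> e = y mod 24"
proof -
  assume e: "e < 24"
  define z where "z = y mod 24"
  have z: "z < 24" unfolding z_def by simp
  show ?thesis unfolding z_def[symmetric] using e z by (cases "e \<le> z") (auto simp: mod_if)
qed
lemma aux3: "e < 24 \<Longrightarrow> (y::nat) < 24 \<Longrightarrow> (y + 24 - (y + 24 - e) mod 24) mod 24 = e"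
  by (simp add: mod_if)
lemma aux2: "e < 24 \<Longrightarrow> (((x::nat) + 23) mod 24 + 24 - e) mod 24 = (x mod 24 + 24 - e + 23) mod 24"
proof -
  assume e: "e < 24"
  define z where "z = x mod 24"
  have z: "z < 24" unfolding z_def by simp
  have "(x + 23) mod 24 = (z + 23) mod 24" unfolding z_def by (simp add: mod_add_left_eq)
  then show ?thesis unfolding z_def[symmetric] using e z by (simp add: mod_if)
qed
lemma aux1: "(Suc j mod 24 = (x::nat) mod 24) \<longleftrightarrow> (j mod 24 = (x + 23) mod 24)"
proof -
  have "int (Suc j) - int x = (int j - int (x + 23)) + 24" by simp
  then show ?thesis unfolding modeq by (metis dvd_add_left_iff dvd_refl)
qed

lemma cnt_mod: "x mod 24 = y mod 24 \<Longrightarrow> cnt n x = cnt n y"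
  unfolding cnt_def by simp

lemma per_cnt: "per (cnt n)"
  unfolding per_def by (auto intro: cnt_mod)

lemma cnt_0: "cnt 0 x = (if x mod 24 = 0 then 1 else 0)"
  unfolding cnt_def by auto

lemma cnt_Suc: "cnt (Suc n) x = cnt n x + cnt n (x + 23)"
proof -
  have 1: "cnt (Suc n) x = (if 0 mod 24 = x mod 24 then 1 else 0) +
     (\<Sum>j\<le>n. if Suc j mod 24 = x mod 24 then int (Suc n choose Suc j) else 0)"
    unfolding cnt_def by (subst sum.atMost_Suc_shift) simp
  have 2: "(\<Sum>j\<le>n. if Suc j mod 24 = x mod 24 then int (Suc n choose Suc j) else 0)
     = (\<Sum>j\<le>n. if Suc j mod 24 = x mod 24 then int (n choose j) else 0)
     + (\<Sum>j\<le>n. if Suc j mod 24 = x mod 24 then int (n choose Suc j) else 0)"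
    by (subst sum.distrib[symmetric], intro sum.cong refl) auto
  have 3: "(\<Sum>j\<le>n. if Suc j mod 24 = x mod 24 then int (n choose j) else 0) = cnt n (x + 23)"
    unfolding cnt_def by (intro sum.cong refl) (simp add: aux1)
  have 4: "(if 0 mod 24 = x mod 24 then 1 else 0) + (\<Sum>j\<le>n. if Suc j mod 24 = x mod 24 then int (n choose Suc j) else 0)
     = (\<Sum>j\<le>Suc n. if j mod 24 = x mod 24 then int (n choose j) else 0)"
    by (subst sum.atMost_Suc_shift) simp
  have 5: "(\<Sum>j\<le>Suc n. if j mod 24 = x mod 24 then int (n choose j) else 0) = cnt n x"
    unfolding cnt_def by simp
  have 6: "cnt (Suc n) x = cnt n (x + 23) + ((if 0 mod 24 = x mod 24 then 1 else 0) +
     (\<Sum>j\<le>n. if Suc j mod 24 = x mod 24 then int (n choose Suc j) else 0))"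
    unfolding 1 2 3 by (simp only: ac_simps)
  show ?thesis unfolding 6 4 5 by (simp only: ac_simps)
qed

lemma cv_mod: "cv f g x = cv f g (x mod 24)"
  unfolding cv_def by simp

lemma cv_cnt: "cnt (a + b) x = cv (cnt a) (cnt b) x"
proof (induction b arbitrary: x)
  case 0
  have "cv (cnt a) (cnt 0) x = (\<Sum>e<24. if e = x mod 24 then cnt a e else 0)"
    unfolding cv_def cnt_0 by (intro sum.cong refl) (auto simp: aux0)
  also have "\<dots> = cnt a (x mod 24)" by simp
  also have "\<dots> = cnt a x" by (rule cnt_mod) simp
  finally show ?case by simp
next
  case (Suc b)
  have "cnt (a + Suc b) x = cv (cnt a) (cnt b) x + cv (cnt a) (cnt b) (x + 23)"
    using Suc by (simp add: cnt_Suc)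
  also have "\<dots> = (\<Sum>e<24. cnt a e * (cnt b (x mod 24 + 24 - e) + cnt b (x mod 24 + 24 - e + 23)))"
    unfolding cv_def sum.distrib[symmetric] distrib_left
  proof (intro sum.cong refl)
    fix e assume "e \<in> {..<(24::nat)}"
    then have e: "e < 24" by simp
    have "cnt b ((x + 23) mod 24 + 24 - e) = cnt b (x mod 24 + 24 - e + 23)"
      by (rule cnt_mod[OF aux2[OF e]])
    then show "cnt a e * cnt b (x mod 24 + 24 - e) + cnt a e * cnt b ((x + 23) mod 24 + 24 - e) =
         cnt a e * cnt b (x mod 24 + 24 - e) + cnt a e * cnt b (x mod 24 + 24 - e + 23)" by simp
  qed
  also have "\<dots> = cv (cnt a) (cnt (Suc b)) x"
    unfolding cv_def cnt_Suc ..
  finally show ?case .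
qed

lemma cv_comm:
  assumes "per f" "per g" shows "cv f g x = cv g f x"
proof -
  define y where "y = x mod 24"
  have y: "y < 24" unfolding y_def by simp
  define h where "h = (\<lambda>e. (y + 24 - e) mod 24)"
  have "(\<Sum>e<24. g e * f (y + 24 - e)) = (\<Sum>e<24. f e * g (y + 24 - e))"
  proof (rule sum.reindex_bij_witness[where i = h and j = h])
    fix e assume e: "e \<in> {..<(24::nat)}"
    then show "h (h e) = e" using y aux3 unfolding h_def by simp
    show "h e \<in> {..<24}" unfolding h_def by simp
    have "f (h e) = f (y + 24 - e)" using assms(1) unfolding per_def h_def by metis
    moreover have "g (y + 24 - h e) = g e"
      using assms(2) aux3[of e y] e y unfolding per_def h_def by (metis lessThan_iff)
    ultimately show "f (h e) * g (y + 24 - h e) = g e * f (y + 24 - e)" by simp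
  next
    fix b assume "b \<in> {..<(24::nat)}"
    then show "h (h b) = b" using y aux3 unfolding h_def by simp
    show "h b \<in> {..<24}" unfolding h_def by simp
  qed
  then show ?thesis unfolding cv_def y_def by simp
qed

lemma cv_expand:
  assumes "\<And>x. F x = a x + k * b x + m * c x"
  shows "cv F F x = cv a a x + k * (cv a b x + cv b a x) + k^2 * cv b b x
     + m * (cv a c x + cv c a x) + k * m * (cv b c x + cv c b x) + m^2 * cv c c x"
proof -
  define y where "y = x mod 24"
  have "cv F F x = (\<Sum>e<24. a e * a (y + 24 - e) + k * (a e * b (y + 24 - e) + b e * a (y + 24 - e))
     + k^2 * (b e * b (y + 24 - e)) + m * (a e * c (y + 24 - e) + c e * a (y + 24 - e))
     + k * m * (b e * c (y + 24 - e) + c e * b (y + 24 - e)) + m^2 * (c e * c (y + 24 - e)))"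
    unfolding cv_def y_def assms by (intro sum.cong refl) (simp add: algebra_simps power2_eq_square)
  also have "\<dots> = cv a a x + k * (cv a b x + cv b a x) + k^2 * cv b b x
     + m * (cv a c x + cv c a x) + k * m * (cv b c x + cv c b x) + m^2 * cv c c x"
    unfolding cv_def y_def by (simp add: sum.distrib sum_distrib_left distrib_left)
  finally show ?thesis .
qed



lemma Cmat_cnt:
  assumes r: "r \<in> {1..24}" and s: "s \<in> {1..24}"
  shows "Cmat 24 i r s = cnt i (r + 24 - s)"
proof -
  define t where "t = int r - int s"
  have t: "-23 \<le> t" "t \<le> 23" using r s unfolding t_def by auto
  have key: "(j mod 24 = (r + 24 - s) mod 24) \<longleftrightarrow> (24::int) dvd (int j - t)" for j
  proof -
    have "int j - t = (int j - int (r + 24 - s)) + 24" using s unfolding t_def by auto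
    then show ?thesis unfolding modeq by (metis dvd_add_left_iff dvd_refl)
  qed
  let ?T = "{-(int i + 24)..int i + 24}"
  let ?S = "{a \<in> ?T. 0 \<le> a * 24 + t \<and> a * 24 + t \<le> int i}"
  let ?J = "{j \<in> {..i}. j mod 24 = (r + 24 - s) mod 24}"
  have "Cmat 24 i r s = (\<Sum>a\<in>?T. ibinom i (a * 24 + t))"
    unfolding Cmat_def t_def by (simp add: algebra_simps)
  also have "\<dots> = (\<Sum>a\<in>?S. int (i choose nat (a * 24 + t)))"
    by (rule sum.mono_neutral_cong_right) (auto simp: ibinom_def)
  also have "\<dots> = (\<Sum>j\<in>?J. int (i choose j))"
  proof (rule sum.reindex_bij_witness[where i="\<lambda>j. (int j - t) div 24" and j="\<lambda>a. nat (a * 24 + t)"])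
    fix a assume a: "a \<in> ?S"
    then show "(int (nat (a * 24 + t)) - t) div 24 = a" by simp
    have "nat (a * 24 + t) \<le> i" using a by auto
    moreover have "(24::int) dvd (int (nat (a * 24 + t)) - t)" using a by simp
    ultimately show "nat (a * 24 + t) \<in> ?J" using key by simp
    show "int (i choose nat (a * 24 + t)) = int (i choose nat (a * 24 + t))" ..
  next
    fix b assume b: "b \<in> ?J"
    then have d: "(24::int) dvd (int b - t)" using key by simp
    define q where "q = (int b - t) div 24"
    have q: "q * 24 = int b - t" unfolding q_def using d by simp
    show "nat ((int b - t) div 24 * 24 + t) = b" using q unfolding q_def[symmetric] by simp
    have "b \<le> i" using b by simp
    then show "(int b - t) div 24 \<in> ?S" unfolding q_def[symmetric] using q t by auto
  qed
  also have "\<dots> = cnt i (r + 24 - s)"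
    unfolding cnt_def by (rule sum.inter_filter) simp
  finally show ?thesis .
qed




definition lf :: "int list \<Rightarrow> nat \<Rightarrow> int" where "lf L x = L ! (x mod 24)"
definition L12 :: "int list" where "L12 = [1, 12, 66, 220, 495, 792, 924, 792, 495, 220, 66, 12, 1, 0, 0, 0, 0, 0, 0, 0, 0, 0, 0, 0]"
definition L24 :: "int list" where "L24 = [2, 24, 276, 2024, 10626, 42504, 134596, 346104, 735471, 1307504, 1961256, 2496144, 2704156, 2496144, 1961256, 1307504, 735471, 346104, 134596, 42504, 10626, 2024, 276, 24]"
definition L48 :: "int list" where "L48 = [32247603683102, 30957699535824, 27385657282776, 22314239283824, 16735679644476, 11541849608784, 7309849272616, 4244495113584, 2255226262641, 1094937185984, 488861339136, 215523449664, 139337068936, 215523449664, 488861339136, 1094937185984, 2255226262641, 4244495113584, 7309849272616, 11541849608784, 16735679644476, 22314239283824, 27385657282776, 30957699535824]"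

lemma xm: "(x::nat) mod 24 < 24"
  by simp

lemma per_lf: "per (lf L)"
  unfolding per_def lf_def by simp

lemma cv_lf: "cv (lf A) (lf B) x = (\<Sum>e<24. A ! (e mod 24) * B ! ((x mod 24 + 24 - e) mod 24))"
  unfolding cv_def lf_def ..

definition L1 :: "int list" where "L1 = [1, 1, 0, 0, 0, 0, 0, 0, 0, 0, 0, 0, 0, 0, 0, 0, 0, 0, 0, 0, 0, 0, 0, 0]"
definition L2 :: "int list" where "L2 = [1, 2, 1, 0, 0, 0, 0, 0, 0, 0, 0, 0, 0, 0, 0, 0, 0, 0, 0, 0, 0, 0, 0, 0]"
definition L3 :: "int list" where "L3 = [1, 3, 3, 1, 0, 0, 0, 0, 0, 0, 0, 0, 0, 0, 0, 0, 0, 0, 0, 0, 0, 0, 0, 0]"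
definition L6 :: "int list" where "L6 = [1, 6, 15, 20, 15, 6, 1, 0, 0, 0, 0, 0, 0, 0, 0, 0, 0, 0, 0, 0, 0, 0, 0, 0]"

lemma cnt1: "cnt 1 x = lf L1 x"
proof -
  have "\<forall>y<24. (if 0 = y then 1 else 0) + (if 1 = y then 1 else 0) = L1 ! y"
    unfolding L1_def by code_simp
  then have "(if 0 = x mod 24 then 1 else 0) + (if 1 = x mod 24 then 1 else 0) = L1 ! (x mod 24)"
    using xm[of x] by blast
  moreover have "cnt 1 x = (if 0 = x mod 24 then 1 else 0) + (if 1 = x mod 24 then 1 else 0)"
    unfolding cnt_def by (simp add: atMost_Suc)
  ultimately show ?thesis unfolding lf_def by simp
qed

lemma cnt_add:
  assumes "\<And>x. cnt n x = lf A x" "\<And>x. cnt m x = lf B x"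
    and "\<forall>y<24. (\<Sum>e<24. A ! (e mod 24) * B ! ((y + 24 - e) mod 24)) = C ! y"
  shows "cnt (n + m) x = lf C x"
proof -
  have "cnt n = lf A" "cnt m = lf B" using assms(1,2) by auto
  then have "cnt (n + m) x = cv (lf A) (lf B) x" by (simp add: cv_cnt)
  also have "\<dots> = lf C x" unfolding cv_lf lf_def using assms(3) xm[of x] by blast
  finally show ?thesis .
qed

lemma cnt2: "cnt 2 x = lf L2 x"
proof -
  have "\<forall>y<24. (\<Sum>e<24. L1 ! (e mod 24) * L1 ! ((y + 24 - e) mod 24)) = L2 ! y"
    unfolding L1_def L2_def by code_simp
  note h = this
  show ?thesis using cnt_add[of 1 L1 1 L1 L2 x, OF cnt1 cnt1 h] by (simp add: numeral_2_eq_2)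
qed

lemma cnt3: "cnt 3 x = lf L3 x"
proof -
  have "\<forall>y<24. (\<Sum>e<24. L2 ! (e mod 24) * L1 ! ((y + 24 - e) mod 24)) = L3 ! y"
    unfolding L1_def L2_def L3_def by code_simp
  note h = this
  show ?thesis using cnt_add[of 2 L2 1 L1 L3 x, OF cnt2 cnt1 h] by simp
qed

lemma cnt6: "cnt 6 x = lf L6 x"
proof -
  have "\<forall>y<24. (\<Sum>e<24. L3 ! (e mod 24) * L3 ! ((y + 24 - e) mod 24)) = L6 ! y"
    unfolding L3_def L6_def by code_simp
  note h = this
  show ?thesis using cnt_add[of 3 L3 3 L3 L6 x, OF cnt3 cnt3 h] by simp
qed

lemma cnt12: "cnt 12 x = lf L12 x"
proof -
  have "\<forall>y<24. (\<Sum>e<24. L6 ! (e mod 24) * L6 ! ((y + 24 - e) mod 24)) = L12 ! y"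
    unfolding L6_def L12_def by code_simp
  note h = this
  show ?thesis using cnt_add[of 6 L6 6 L6 L12 x, OF cnt6 cnt6 h] by simp
qed

lemma cnt_dbl:
  assumes "\<And>x. cnt n x = lf A x"
    and "\<forall>y<24. (\<Sum>e<24. A ! (e mod 24) * A ! ((y + 24 - e) mod 24)) = B ! y"
  shows "cnt (n + n) x = lf B x"
proof -
  have "cnt n = lf A" using assms(1) by auto
  then have "cnt (n + n) x = cv (lf A) (lf A) x" by (simp add: cv_cnt)
  also have "\<dots> = lf B x" unfolding cv_lf lf_def using assms(2) by simp
  finally show ?thesis .
qed

lemma cnt24: "cnt 24 x = lf L24 x"
proof -
  have "\<forall>y<24. (\<Sum>e<24. L12 ! (e mod 24) * L12 ! ((y + 24 - e) mod 24)) = L24 ! y"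
    unfolding L12_def L24_def by code_simp
  note h = this
  show ?thesis using cnt_dbl[of 12 L12 L24 x, OF cnt12 h] by simp
qed

lemma cnt48: "cnt 48 x = lf L48 x"
proof -
  have "\<forall>y<24. (\<Sum>e<24. L24 ! (e mod 24) * L24 ! ((y + 24 - e) mod 24)) = L48 ! y"
    unfolding L24_def L48_def by code_simp
  note h = this
  show ?thesis using cnt_dbl[of 24 L24 L48 x, OF cnt24 h] by simp
qed

lemma c00: "cv (lf C0list) (lf C0list) x = 3 * lf C0list x"
proof -
  have "\<forall>y<24. (\<Sum>e<24. C0list ! (e mod 24) * C0list ! ((y + 24 - e) mod 24)) = 3 * C0list ! y"
    unfolding C0list_def by code_simp
  then show ?thesis unfolding cv_lf lf_def using xm[of x] by blast
qed

definition Wl :: "int list" where "Wl = [-1, 0, -1, 0, -1, 0, -1, 0, -1, 0, -1, 0, -1, 0, -1, 0, -1, 0, -1, 0, -1, 0, -1, 0]"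
definition Vl :: "int list" where "Vl = [14, 0, 10, 0, 11, 0, 12, 0, 9, 0, 10, 0, 10, 0, 10, 0, 9, 0, 12, 0, 11, 0, 10, 0]"
definition Bl :: "int list" where "Bl = [6046425690581, 5804568662967, 5134810740520, 4183919865717, 3137939933339, 2164096801647, 1370596738615, 795842833797, 422854924245, 205300722372, 91661501088, 40410646812, 26125700425, 40410646812, 91661501088, 205300722372, 422854924245, 795842833797, 1370596738615, 2164096801647, 3137939933339, 4183919865717, 5134810740520, 5804568662967]"

lemma c01: "cv (lf C0list) (lf C1list) x + cv (lf C1list) (lf C0list) x = 6 * lf C1list x + 8 * lf Wl x"
proof -
  have "\<forall>y<24. (\<Sum>e<24. C0list ! (e mod 24) * C1list ! ((y + 24 - e) mod 24))
     + (\<Sum>e<24. C1list ! (e mod 24) * C0list ! ((y + 24 - e) mod 24)) = 6 * C1list ! y + 8 * Wl ! y"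
    unfolding C0list_def C1list_def Wl_def by code_simp
  then show ?thesis unfolding cv_lf lf_def using xm[of x] by blast
qed

lemma c11: "cv (lf C1list) (lf C1list) x = 2 * lf Vl x"
proof -
  have "\<forall>y<24. (\<Sum>e<24. C1list ! (e mod 24) * C1list ! ((y + 24 - e) mod 24)) = 2 * Vl ! y"
    unfolding C1list_def Vl_def by code_simp
  then show ?thesis unfolding cv_lf lf_def using xm[of x] by blast
qed

lemma base16: "3 * cnt 48 x - lf C0list x - 4 * lf C1list x = 16 * lf Bl x"
proof -
  have "\<forall>y<24. 3 * L48 ! y - C0list ! y - 4 * C1list ! y = 16 * Bl ! y"
    unfolding L48_def C0list_def C1list_def Bl_def by code_simp
  then show ?thesis unfolding cnt48 lf_def using xm[of x] by blast
qed




lemma idx: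
  assumes "r \<in> {1..24}" "s \<in> {1..24}"
  shows "nat ((int s - int r) mod 24) = (24 - (r + 24 - s) mod 24) mod 24"
proof -
  have y: "(r + 24 - s) mod 24 \<le> 24" by simp
  have s: "s \<le> r + 24" using assms by simp
  have "int ((24 - (r + 24 - s) mod 24) mod 24) = (24 - int ((r + 24 - s) mod 24)) mod 24"
    using y by (simp add: of_nat_mod of_nat_diff)
  also have "\<dots> = (24 - (int r + 24 - int s) mod 24) mod 24"
    using s by (simp add: of_nat_mod of_nat_diff)
  also have "\<dots> = (24 - (int r + 24 - int s)) mod 24" by (rule mod_diff_right_eq)
  also have "(24 - (int r + 24 - int s)) = int s - int r" by simp
  finally show ?thesis by (metis nat_int)
qed

lemma xm24: "(x::nat) mod 24 < 24"
  by simp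

lemma sym0: "\<forall>y<24. C0list ! y = C0list ! ((24 - y) mod 24)"
  unfolding C0list_def by code_simp

lemma sym1: "\<forall>y<24. C1list ! y = C1list ! ((24 - y) mod 24)"
  unfolding C1list_def by code_simp

lemma circ:
  assumes "r \<in> {1..24}" "s \<in> {1..24}" and L: "length L = 24" "\<forall>y<24. L ! y = L ! ((24 - y) mod 24)"
  shows "Circ L r s = L ! ((r + 24 - s) mod 24)"
proof -
  have "Circ L r s = L ! ((24 - (r + 24 - s) mod 24) mod 24)"
    unfolding Circ_def L(1) using idx[OF assms(1,2)] by simp
  also have "\<dots> = L ! ((r + 24 - s) mod 24)"
  proof -
    have "L ! ((r + 24 - s) mod 24) = L ! ((24 - (r + 24 - s) mod 24) mod 24)"
      using L(2) xm24[of "r + 24 - s"] by blast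
    then show ?thesis by (rule sym)
  qed
  finally show ?thesis .
qed




lemma main_step:
  assumes u: "u \<ge> 4"
    and IH: "\<And>x. (2::int)^u dvd (3 * cnt (3 * 2^u) x - lf C0list x - 2^(u-2) * lf C1list x)"
  shows "(2::int)^(Suc u) dvd (3 * cnt (3 * 2^(Suc u)) x - lf C0list x - 2^(Suc u - 2) * lf C1list x)"
proof -
  obtain v where v: "u = v + 4" using u by (metis add.commute le_Suc_ex)
  define N where "N = (3 * 2^u :: nat)"
  define k where "k = (2::int)^(u-2)"
  define m where "m = (2::int)^u"
  define j where "j = (2::int)^(u-4)"
  define c0 where "c0 = lf C0list"
  define c1 where "c1 = lf C1list"
  have kj: "k = 4 * j" unfolding k_def j_def v by (simp add: power_add)
  have mj: "m = 16 * j" unfolding m_def j_def v by (simp add: power_add)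
  have sj: "(2::int)^(Suc u) = 32 * j" unfolding j_def v by (simp add: power_add)
  have k2: "(2::int)^(Suc u - 2) = 8 * j" unfolding j_def v by (simp add: power_add)
  have NN: "3 * 2^(Suc u) = N + N" unfolding N_def by simp
  define E where "E x = (3 * cnt N x - c0 x - k * c1 x) div m" for x
  have hE: "3 * cnt N x = c0 x + k * c1 x + m * E x" for x
  proof -
    have "m dvd (3 * cnt N x - c0 x - k * c1 x)" using IH[of x] unfolding m_def N_def c0_def c1_def k_def .
    then have "m * E x = 3 * cnt N x - c0 x - k * c1 x" unfolding E_def by simp
    then show ?thesis by simp
  qed
  have perE: "per E"
    unfolding per_def
  proof
    fix x
    have a: "cnt N (x mod 24) = cnt N x" by (rule cnt_mod) simp
    have b: "lf L (x mod 24) = lf L x" for L unfolding lf_def by simp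
    show "E x = E (x mod 24)" unfolding E_def c0_def c1_def a b ..
  qed
  have per0: "per c0" "per c1" unfolding c0_def c1_def by (rule per_lf)+
  have F: "cv (\<lambda>x. 3 * cnt N x) (\<lambda>x. 3 * cnt N x) x = 9 * cnt (N + N) x"
    unfolding cv_cnt by (simp add: cv_def sum_distrib_left mult_ac)
  have ex: "cv (\<lambda>x. 3 * cnt N x) (\<lambda>x. 3 * cnt N x) x = cv c0 c0 x + k * (cv c0 c1 x + cv c1 c0 x) + k^2 * cv c1 c1 x
     + m * (cv c0 E x + cv E c0 x) + k * m * (cv c1 E x + cv E c1 x) + m^2 * cv E E x"
    by (rule cv_expand) (rule hE)
  have cm: "cv E c0 x = cv c0 E x" "cv E c1 x = cv c1 E x"
    using cv_comm perE per0 by auto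
  have eq9: "9 * cnt (N + N) x = 3 * c0 x + k * (6 * c1 x + 8 * lf Wl x) + k^2 * (2 * lf Vl x)
     + m * (2 * cv c0 E x) + k * m * (2 * cv c1 E x) + m^2 * cv E E x"
    using F ex cm c00[of x] c01[of x] c11[of x] unfolding c0_def c1_def by simp
  define D where "D = 3 * cnt (N + N) x - c0 x - 8 * j * c1 x"
  have "3 * D = 32 * j * (lf Wl x + j * lf Vl x + cv c0 E x + 4 * j * cv c1 E x + 8 * j * cv E E x)"
  proof -
    have "3 * D = 9 * cnt (N + N) x - 3 * c0 x - 24 * j * c1 x" unfolding D_def by simp
    also have "\<dots> = 32 * j * (lf Wl x + j * lf Vl x + cv c0 E x + 4 * j * cv c1 E x + 8 * j * cv E E x)"
      unfolding eq9 kj mj by (simp add: algebra_simps power2_eq_square)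
    finally show ?thesis .
  qed
  then have "(2::int)^(Suc u) dvd 3 * D" unfolding sj by simp
  then have "(2::int)^(Suc u) dvd D * 3" by (simp add: mult.commute)
  moreover have "coprime ((2::int)^(Suc u)) 3" by simp
  ultimately have "(2::int)^(Suc u) dvd D" using coprime_dvd_mult_left_iff by blast
  then show ?thesis unfolding D_def NN k2 c0_def c1_def by (simp add: mult.assoc)
qed

lemma allu:
  assumes "u \<ge> 4"
  shows "(2::int)^u dvd (3 * cnt (3 * 2^u) x - lf C0list x - 2^(u-2) * lf C1list x)"
  using assms
proof (induction u arbitrary: x rule: dec_induct)
  case base
  show ?case using base16[of x] by simp
next
  case (step n)
  show ?case by (rule main_step[OF step.hyps(1) step.IH])
qed


theorem theorem8:
  fixes u :: nat
  assumes "u \<ge> 4"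
  shows "\<forall>r\<in>{1..24}. \<forall>s\<in>{1..24}.
           (3 * Cmat 24 (3 * 2 ^ u) r s) mod (2 ^ u) =
           (Circ C0list r s + 2 ^ (u - 2) * Circ C1list r s) mod (2 ^ u)"
proof (intro ballI)
  fix r s :: nat
  assume r: "r \<in> {1..24}" and s: "s \<in> {1..24}"
  have len: "length C0list = 24" "length C1list = 24" by (simp_all add: C0list_def C1list_def)
  have c0: "Circ C0list r s = lf C0list (r + 24 - s)"
    unfolding lf_def by (rule circ[OF r s len(1) sym0])
  have c1: "Circ C1list r s = lf C1list (r + 24 - s)"
    unfolding lf_def by (rule circ[OF r s len(2) sym1])
  have cm: "Cmat 24 (3 * 2 ^ u) r s = cnt (3 * 2 ^ u) (r + 24 - s)" by (rule Cmat_cnt[OF r s])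
  have "(2::int) ^ u dvd (3 * cnt (3 * 2 ^ u) (r + 24 - s) - lf C0list (r + 24 - s)
      - 2 ^ (u - 2) * lf C1list (r + 24 - s))"
    by (rule allu[OF assms])
  then show "(3 * Cmat 24 (3 * 2 ^ u) r s) mod (2 ^ u) =
           (Circ C0list r s + 2 ^ (u - 2) * Circ C1list r s) mod (2 ^ u)"
    unfolding c0 c1 cm by (simp add: mod_eq_dvd_iff algebra_simps)
qed

end
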